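(* For every integer $n \geq 3$, $\gamma_{b,2}(C_3 \square C_n) = \left\lceil \frac{2n}{3} \right\rceil$.
   Context: For a graph $G$, a $2$-limited broadcast is a function $f: V(G) \to \{0,1,2\}$. A vertex $u$ hears the broadcast from $v$ if $f(v) > 0$ and $d(u,v) \leq f(v)$, where $d$ is the distance in $G$. The broadcast $f$ is dominating if every vertex of $G$ hears the broadcast from some vertex. The cost of $f$ is $\sum_{v \in V(G)} f(v)$. The $2$-limited broadcast domination number $\gamma_{b,2}(G)$ is the minimum cost of a $2$-limited dominating broadcast on $G$. $C_n$ denotes the cycle on $n$ vertices, $P_n$ the path on $n$ vertices, and $\square$ the Cartesian product of graphs. *)

theory Defs
  imports Complex_Main
begin

definition is_walk :: "'a set \<Rightarrow> ('a \<Rightarrow> 'a \<Rightarrow> bool) \<Rightarrow> 'a list \<Rightarrow> 'a \<Rightarrow> 'a \<Rightarrow> bool" where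
  "is_walk V E p u v \<longleftrightarrow> p \<noteq> [] \<and> set p \<subseteq> V \<and> hd p = u \<and> last p = v \<and>
     (\<forall>i. Suc i < length p \<longrightarrow> E (p ! i) (p ! Suc i))"

text \<open>Graph distance (for vertices in the same component): least length of a walk.\<close>
definition gdist :: "'a set \<Rightarrow> ('a \<Rightarrow> 'a \<Rightarrow> bool) \<Rightarrow> 'a \<Rightarrow> 'a \<Rightarrow> nat" where
  "gdist V E u v = (LEAST k. \<exists>p. is_walk V E p u v \<and> length p = Suc k)"

definition connected_graph :: "'a set \<Rightarrow> ('a \<Rightarrow> 'a \<Rightarrow> bool) \<Rightarrow> bool" where
  "connected_graph V E \<longleftrightarrow> (\<forall>u\<in>V. \<forall>v\<in>V. \<exists>p. is_walk V E p u v)"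

definition limited_broadcast :: "nat \<Rightarrow> 'a set \<Rightarrow> ('a \<Rightarrow> nat) \<Rightarrow> bool" where
  "limited_broadcast k V f \<longleftrightarrow> (\<forall>v\<in>V. f v \<le> k) \<and> (\<forall>v. v \<notin> V \<longrightarrow> f v = 0)"

definition hears :: "'a set \<Rightarrow> ('a \<Rightarrow> 'a \<Rightarrow> bool) \<Rightarrow> ('a \<Rightarrow> nat) \<Rightarrow> 'a \<Rightarrow> 'a \<Rightarrow> bool" where
  "hears V E f u v \<longleftrightarrow> f v > 0 \<and> gdist V E u v \<le> f v"

definition dominating_broadcast :: "'a set \<Rightarrow> ('a \<Rightarrow> 'a \<Rightarrow> bool) \<Rightarrow> ('a \<Rightarrow> nat) \<Rightarrow> bool" where
  "dominating_broadcast V E f \<longleftrightarrow> (\<forall>u\<in>V. \<exists>v\<in>V. hears V E f u v)"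

definition broadcast_cost :: "'a set \<Rightarrow> ('a \<Rightarrow> nat) \<Rightarrow> nat" where
  "broadcast_cost V f = (\<Sum>v\<in>V. f v)"

definition limited_broadcast_domination_number ::
    "nat \<Rightarrow> 'a set \<Rightarrow> ('a \<Rightarrow> 'a \<Rightarrow> bool) \<Rightarrow> nat" where
  "limited_broadcast_domination_number k V E =
     (LEAST c. \<exists>f. limited_broadcast k V f \<and> dominating_broadcast V E f \<and> broadcast_cost V f = c)"

definition cycle_V :: "nat \<Rightarrow> nat set" where
  "cycle_V n = {0..<n}"

definition cycle_E :: "nat \<Rightarrow> nat \<Rightarrow> nat \<Rightarrow> bool" where
  "cycle_E n i j \<longleftrightarrow> i < n \<and> j < n \<and> (j = (i + 1) mod n \<or> i = (j + 1) mod n) \<and> i \<noteq> j"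

definition cart_V :: "'a set \<Rightarrow> 'b set \<Rightarrow> ('a \<times> 'b) set" where
  "cart_V V1 V2 = V1 \<times> V2"

definition cart_E :: "('a \<Rightarrow> 'a \<Rightarrow> bool) \<Rightarrow> ('b \<Rightarrow> 'b \<Rightarrow> bool) \<Rightarrow> ('a \<times> 'b) \<Rightarrow> ('a \<times> 'b) \<Rightarrow> bool" where
  "cart_E E1 E2 x y \<longleftrightarrow> (fst x = fst y \<and> E2 (snd x) (snd y)) \<or> (snd x = snd y \<and> E1 (fst x) (fst y))"

end

theory Submission imports Defs begin

definition sc :: "nat \<Rightarrow> nat \<Rightarrow> nat" where "sc n j = (if Suc j = n then 0 else Suc j)"
definition pc :: "nat \<Rightarrow> nat \<Rightarrow> nat" where "pc n j = (if j = 0 then n - 1 else j - 1)"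

lemma sc_lt: "j < n \<Longrightarrow> sc n j < n" unfolding sc_def by auto
lemma pc_lt: "j < n \<Longrightarrow> pc n j < n" unfolding pc_def by auto
lemma pc_sc[simp]: "j < n \<Longrightarrow> pc n (sc n j) = j" unfolding sc_def pc_def by auto
lemma sc_pc[simp]: "j < n \<Longrightarrow> sc n (pc n j) = j" unfolding sc_def pc_def by auto
lemma sc_eq_iff: "j < n \<Longrightarrow> k < n \<Longrightarrow> (k = sc n j) = (j = pc n k)"
  unfolding sc_def pc_def by auto

lemma cycle_E_iff: "cycle_E n i j \<longleftrightarrow> i < n \<and> j < n \<and> i \<noteq> j \<and> (j = sc n i \<or> j = pc n i)"
proof -
  have m: "i < n \<Longrightarrow> (i + 1) mod n = sc n i" for i unfolding sc_def
    by (cases "Suc i = n") auto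
  show ?thesis
  proof (cases "i < n \<and> j < n")
    case True
    then have e1: "Suc i mod n = sc n i" and e2: "Suc j mod n = sc n j" using m by auto
    show ?thesis unfolding cycle_E_def Suc_eq_plus1[symmetric] e1 e2 using True sc_eq_iff[of j n i] by blast
  qed (auto simp: cycle_E_def)
qed

lemma cycle3: "cycle_E 3 a b \<longleftrightarrow> a < 3 \<and> b < 3 \<and> a \<noteq> b"
proof
  assume "cycle_E 3 a b"
  then show "a < 3 \<and> b < 3 \<and> a \<noteq> b" unfolding cycle_E_def by blast
next
  assume h: "a < 3 \<and> b < 3 \<and> a \<noteq> b"
  have three: "x < 3 \<Longrightarrow> x = 0 \<or> x = 1 \<or> x = 2" for x :: nat by linarith
  have a: "a = 0 \<or> a = 1 \<or> a = 2" using three h by blast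
  have b: "b = 0 \<or> b = 1 \<or> b = 2" using three h by blast
  show "cycle_E 3 a b" unfolding cycle_E_def using a b h by auto
qed

abbreviation "VV n \<equiv> cart_V (cycle_V 3) (cycle_V n)"
abbreviation "EE n \<equiv> cart_E (cycle_E 3) (cycle_E n)"

lemma VV_eq: "VV n = {0..<3} \<times> {0..<n}" unfolding cart_V_def cycle_V_def by simp

lemma EE_iff: "EE n (a,j) (b,k) \<longleftrightarrow> (a = b \<and> cycle_E n j k) \<or> (j = k \<and> a < 3 \<and> b < 3 \<and> a \<noteq> b)"
  unfolding cart_E_def cycle3 by auto

lemma walk_single: "u \<in> V \<Longrightarrow> is_walk V E [u] u u" unfolding is_walk_def by auto

lemma walk_cons:
  assumes w: "is_walk V E p w v" and u: "u \<in> V" and e: "E u w"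
  shows "is_walk V E (u # p) u v"
proof -
  from w have ne: "p \<noteq> []" and s: "set p \<subseteq> V" and h: "hd p = w" and l: "last p = v"
    and st: "\<forall>i. Suc i < length p \<longrightarrow> E (p ! i) (p ! Suc i)" unfolding is_walk_def by auto
  have h0: "p ! 0 = w" using ne h by (simp add: hd_conv_nth)
  have "\<forall>i. Suc i < length (u # p) \<longrightarrow> E ((u # p) ! i) ((u # p) ! Suc i)"
  proof (intro allI impI)
    fix i assume "Suc i < length (u # p)"
    then show "E ((u # p) ! i) ((u # p) ! Suc i)"
      using st e h0 by (cases i) auto
  qed
  then show ?thesis unfolding is_walk_def using ne s l u by auto
qed

lemma walk_len: "is_walk V E p u v \<Longrightarrow> length p = Suc (length p - 1)"
  unfolding is_walk_def by (cases p) auto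

lemma gdist_le:
  assumes w: "is_walk V E p u v" shows "gdist V E u v \<le> length p - 1"
proof -
  have l: "length p = Suc (length p - 1)" using walk_len[OF w] .
  show ?thesis unfolding gdist_def
    by (rule Least_le, rule exI[of _ p]) (use w l in simp)
qed

lemma gdist_ex:
  assumes w: "is_walk V E p u v" shows "\<exists>q. is_walk V E q u v \<and> length q = Suc (gdist V E u v)"
proof -
  have l: "length p = Suc (length p - 1)" using walk_len[OF w] .
  have "\<exists>k q. is_walk V E q u v \<and> length q = Suc k" using w l by blast
  then show ?thesis unfolding gdist_def by (rule LeastI_ex)
qed

lemma walk_short:
  assumes "is_walk V E p u v" "length p \<le> 3"
  shows "u = v \<or> E u v \<or> (length p = 3 \<and> (\<exists>x\<in>V. E u x \<and> E x v))"
proof -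
  from assms have ne: "p \<noteq> []" and hd: "hd p = u" and la: "last p = v" and sub: "set p \<subseteq> V"
    and st: "\<forall>i. Suc i < length p \<longrightarrow> E (p ! i) (p ! Suc i)" unfolding is_walk_def by auto
  obtain x p1 where p: "p = x # p1" using ne by (cases p) auto
  show ?thesis
  proof (cases p1)
    case Nil then show ?thesis using p hd la by simp
  next
    case (Cons y p2)
    note c1 = this
    show ?thesis
    proof (cases p2)
      case Nil
      have "E x y" using st p c1 Nil by force
      then show ?thesis using p c1 Nil hd la by simp
    next
      case (Cons z p3)
      note c2 = this
      have p3: "p3 = []" using assms(2) p c1 c2 by simp
      have e1: "E x y" using st p c1 c2 by force
      have e2: "E y z" using st p c1 c2 p3 by force
      have "y \<in> V" using sub p c1 by simp
      then show ?thesis using e1 e2 p c1 c2 p3 hd la by auto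
    qed
  qed
qed

lemma col_walk_up:
  assumes "a < 3" "k < n"
  shows "j \<le> k \<Longrightarrow> \<exists>p. is_walk (VV n) (EE n) p (a, j) (a, k)"
proof (induction "k - j" arbitrary: j)
  case 0
  then have "j = k" by simp
  then show ?case using walk_single[of "(a,k)" "VV n"] assms by (auto simp: VV_eq)
next
  case (Suc m)
  have "m = k - Suc j" "Suc j \<le> k" using Suc.hyps(2) by arith+
  then obtain p where p: "is_walk (VV n) (EE n) p (a, Suc j) (a, k)" using Suc.hyps(1) by blast
  have "EE n (a, j) (a, Suc j)" unfolding EE_iff cycle_E_iff sc_def using Suc assms by auto
  then show ?case using walk_cons[OF p, of "(a,j)"] Suc assms by (auto simp: VV_eq)
qed

lemma col_walk_down:
  assumes "a < 3" "k < n" "2 \<le> n"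
  shows "k < j \<Longrightarrow> j < n \<Longrightarrow> \<exists>p. is_walk (VV n) (EE n) p (a, j) (a, k)"
proof (induction "n - 1 - j" arbitrary: j)
  case 0
  then have j: "j = n - 1" by arith
  obtain p where p: "is_walk (VV n) (EE n) p (a, 0) (a, k)" using col_walk_up[OF assms(1,2), of 0] by auto
  have e: "EE n (a, j) (a, 0)" unfolding EE_iff cycle_E_iff sc_def using j assms 0 by auto
  have m: "(a, j) \<in> VV n" using assms 0 by (simp add: VV_eq)
  show ?case using walk_cons[OF p m e] by blast
next
  case (Suc m)
  have hh: "m = n - 1 - Suc j" "k < Suc j" "Suc j < n" using Suc.hyps(2) Suc.prems by arith+
  then obtain p where p: "is_walk (VV n) (EE n) p (a, Suc j) (a, k)" using Suc.hyps(1) by blast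
  have e: "EE n (a, j) (a, Suc j)" unfolding EE_iff cycle_E_iff sc_def using hh by auto
  have m: "(a, j) \<in> VV n" using assms Suc.prems by (simp add: VV_eq)
  show ?case using walk_cons[OF p m e] by blast
qed

lemma conn:
  assumes "3 \<le> n" "u \<in> VV n" "v \<in> VV n"
  shows "\<exists>p. is_walk (VV n) (EE n) p u v"
proof -
  obtain a j b k where u: "u = (a, j)" and v: "v = (b, k)" and r: "a < 3" "j < n" "b < 3" "k < n"
    using assms by (auto simp: VV_eq)
  have "\<exists>p. is_walk (VV n) (EE n) p (b, j) (b, k)"
  proof (cases "j \<le> k")
    case True then show ?thesis using col_walk_up[of b k n j] r by auto
  next
    case False then show ?thesis using col_walk_down[of b k n j] r assms(1) by auto
  qed
  then obtain p where p: "is_walk (VV n) (EE n) p (b, j) (b, k)" by blast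
  show ?thesis
  proof (cases "a = b")
    case True then show ?thesis using p u v by blast
  next
    case False
    have e: "EE n (a, j) (b, j)" using False r by (simp add: EE_iff)
    have m: "(a, j) \<in> VV n" using r by (simp add: VV_eq)
    have "is_walk (VV n) (EE n) ((a, j) # p) (a, j) (b, k)" by (rule walk_cons[OF p m e])
    then show ?thesis using u v by blast
  qed
qed

lemma hears_cases:
  assumes n3: "3 \<le> n" and u: "u \<in> VV n" and v: "v \<in> VV n"
    and h: "hears (VV n) (EE n) f u v" and f2: "f v \<le> 2"
  shows "0 < f v \<and> (u = v \<or> EE n u v \<or> (f v = 2 \<and> (\<exists>x\<in>VV n. EE n u x \<and> EE n x v)))"
proof -
  have hh: "0 < f v \<and> gdist (VV n) (EE n) u v \<le> f v" using h by (simp only: hears_def)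
  then have pos: "0 < f v" and d: "gdist (VV n) (EE n) u v \<le> f v" by blast+
  obtain p0 where "is_walk (VV n) (EE n) p0 u v" using conn[OF n3 u v] by blast
  then obtain q where q: "is_walk (VV n) (EE n) q u v" "length q = Suc (gdist (VV n) (EE n) u v)"
    using gdist_ex[of "VV n" "EE n" p0 u v] by auto
  have "length q \<le> 3" using q(2) d f2 by linarith
  from walk_short[OF q(1) this] have "u = v \<or> EE n u v \<or> (length q = 3 \<and> (\<exists>x\<in>VV n. EE n u x \<and> EE n x v))" .
  moreover have "length q = 3 \<Longrightarrow> f v = 2" using q(2) d f2 by linarith
  ultimately show ?thesis using pos by blast
qed

definition near :: "nat \<Rightarrow> nat \<Rightarrow> nat \<Rightarrow> bool" where
  "near n k c \<longleftrightarrow> k = c \<or> k = sc n c \<or> k = pc n c"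

definition wt :: "nat \<Rightarrow> (nat \<times> nat \<Rightarrow> nat) \<Rightarrow> nat \<times> nat \<Rightarrow> nat \<Rightarrow> nat" where
  "wt n f v c = (if f v = 2 \<and> near n (snd v) c then 2 else if f v = 1 \<and> snd v = c then 3 else 0)"

definition gg :: "nat \<Rightarrow> (nat \<times> nat \<Rightarrow> nat) \<Rightarrow> nat \<Rightarrow> nat" where
  "gg n f c = (\<Sum>v\<in>VV n. wt n f v c)"

lemma finVV: "finite (VV n)" by (simp add: VV_eq)

lemma gg_zero: "gg n f c = 0 \<Longrightarrow> v \<in> VV n \<Longrightarrow> wt n f v c = 0"
  unfolding gg_def using finVV by (simp add: sum_eq_0_iff)

lemma gg_ge: assumes v: "v \<in> VV n" shows "wt n f v c \<le> gg n f c"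
  unfolding gg_def by (rule member_le_sum[OF v]) (simp_all add: finVV)

lemma gg_ge2:
  assumes "x \<in> VV n" "y \<in> VV n" "x \<noteq> y"
  shows "wt n f x c + wt n f y c \<le> gg n f c"
proof -
  have "wt n f x c + wt n f y c = (\<Sum>v\<in>{x, y}. wt n f v c)" using assms(3) by simp
  also have "\<dots> \<le> gg n f c" unfolding gg_def
    by (rule sum_mono2[OF finVV]) (use assms in auto)
  finally show ?thesis .
qed

lemma gg_pos2: "gg n f c \<noteq> 0 \<Longrightarrow> 2 \<le> gg n f c"
proof -
  assume "gg n f c \<noteq> 0"
  then obtain v where v: "v \<in> VV n" "wt n f v c \<noteq> 0" unfolding gg_def
    by (meson sum.neutral)
  then have "2 \<le> wt n f v c" unfolding wt_def by (auto split: if_splits)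
  with gg_ge[OF v(1), of f c] show ?thesis by linarith
qed

lemma bad_side:
  assumes n3: "3 \<le> n" and lb: "\<forall>v\<in>VV n. f v \<le> 2"
    and dom: "dominating_broadcast (VV n) (EE n) f" and j: "j < n" and z: "gg n f j = 0"
  shows "4 \<le> gg n f (pc n j) \<or> 4 \<le> gg n f (sc n j)"
proof -
  have row: "\<exists>v\<in>VV n. fst v = a \<and> (2 \<le> wt n f v (pc n j) \<or> 2 \<le> wt n f v (sc n j))" if a: "a < 3" for a
  proof -
    have u: "(a, j) \<in> VV n" using a j by (simp add: VV_eq)
    then obtain v where v: "v \<in> VV n" "hears (VV n) (EE n) f (a, j) v"
      using dom unfolding dominating_broadcast_def by blast
    obtain b k where vbk: "v = (b, k)" "b < 3" "k < n" using v(1) by (auto simp: VV_eq)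
    have hc: "0 < f v \<and> ((a, j) = v \<or> EE n (a, j) v \<or> (f v = 2 \<and> (\<exists>x\<in>VV n. EE n (a, j) x \<and> EE n x v)))"
      using hears_cases[OF n3 u v(1) v(2)] lb v(1) by blast
    have w0: "wt n f v j = 0" using gg_zero[OF z v(1)] .
    have f12: "f v = 1 \<or> f v = 2" using hc lb v(1) by fastforce
    have nn1: "\<not> (f v = 2 \<and> near n k j)" using w0 vbk unfolding wt_def by auto
    have nn2: "\<not> (f v = 1 \<and> k = j)" using w0 vbk nn1 unfolding wt_def by (auto split: if_splits)
    have nearjj: "near n j j" unfolding near_def by simp
    have sc_near: "near n (sc n j) j" "near n (pc n j) j" unfolding near_def by simp_all
    consider "(a, j) = v" | "EE n (a, j) v" | "f v = 2" "\<exists>x\<in>VV n. EE n (a, j) x \<and> EE n x v"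
      using hc by blast
    then show ?thesis
    proof cases
      case 1
      then have "k = j" using vbk by simp
      then show ?thesis using nn1 nn2 f12 nearjj by blast
    next
      case 2
      then have ab: "(a = b \<and> cycle_E n j k) \<or> (j = k)" using vbk by (auto simp: EE_iff)
      show ?thesis
      proof (cases "j = k")
        case True then show ?thesis using nn1 nn2 f12 nearjj by blast
      next
        case False
        then have ab: "a = b" and kk: "k = sc n j \<or> k = pc n j" using ab by (auto simp: cycle_E_iff)
        have fv1: "f v = 1" using kk nn1 f12 sc_near by blast
        show ?thesis
        proof (cases "k = sc n j")
          case True
          then have "wt n f v (sc n j) = 3" using fv1 vbk unfolding wt_def by simp
          then show ?thesis using v(1) vbk ab by (intro bexI[of _ v]) auto
        next
          case False
          then have "k = pc n j" using kk by blast
          then have "wt n f v (pc n j) = 3" using fv1 vbk unfolding wt_def by simp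
          then show ?thesis using v(1) vbk ab by (intro bexI[of _ v]) auto
        qed
      qed
    next
      case 3
      then obtain x where x: "x \<in> VV n" "EE n (a, j) x" "EE n x v" by blast
      obtain a' j' where xa: "x = (a', j')" "a' < 3" "j' < n" using x(1) by (auto simp: VV_eq)
      have e1: "(a = a' \<and> cycle_E n j j') \<or> (j = j')" using x(2) xa by (auto simp: EE_iff)
      have e2: "(a' = b \<and> cycle_E n j' k) \<or> (j' = k)" using x(3) xa vbk by (auto simp: EE_iff)
      have notnear: "\<not> near n k j" using nn1 3 by blast
      show ?thesis
      proof (cases "j = j'")
        case True
        then have "k = j \<or> k = sc n j \<or> k = pc n j" using e2 by (auto simp: cycle_E_iff)
        then show ?thesis using notnear unfolding near_def by blast
      next
        case False
        then have aa: "a = a'" and jj: "j' = sc n j \<or> j' = pc n j" using e1 by (auto simp: cycle_E_iff)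
        show ?thesis
        proof (cases "j' = k")
          case True
          then show ?thesis using jj notnear unfolding near_def by blast
        next
          case False
          then have bb: "a' = b" and kk: "k = sc n j' \<or> k = pc n j'" using e2 by (auto simp: cycle_E_iff)
          have "near n k (sc n j) \<or> near n k (pc n j)"
            using jj kk notnear j unfolding near_def by (auto simp: sc_lt pc_lt)
          then have "wt n f v (sc n j) = 2 \<or> wt n f v (pc n j) = 2"
            using 3 vbk unfolding wt_def by auto
          then show ?thesis using v(1) vbk aa bb by (intro bexI[of _ v]) auto
        qed
      qed
    qed
  qed
  obtain v0 where v0: "v0 \<in> VV n" "fst v0 = 0" "2 \<le> wt n f v0 (pc n j) \<or> 2 \<le> wt n f v0 (sc n j)"
    using row[of 0] by auto
  obtain v1 where v1: "v1 \<in> VV n" "fst v1 = 1" "2 \<le> wt n f v1 (pc n j) \<or> 2 \<le> wt n f v1 (sc n j)"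
    using row[of 1] by auto
  obtain v2 where v2: "v2 \<in> VV n" "fst v2 = 2" "2 \<le> wt n f v2 (pc n j) \<or> 2 \<le> wt n f v2 (sc n j)"
    using row[of 2] by auto
  have d01: "v0 \<noteq> v1" and d02: "v0 \<noteq> v2" and d12: "v1 \<noteq> v2" using v0 v1 v2 by auto
  show ?thesis
    using gg_ge2[OF v0(1) v1(1) d01, of f "pc n j"] gg_ge2[OF v0(1) v2(1) d02, of f "pc n j"]
      gg_ge2[OF v1(1) v2(1) d12, of f "pc n j"]
      gg_ge2[OF v0(1) v1(1) d01, of f "sc n j"] gg_ge2[OF v0(1) v2(1) d02, of f "sc n j"]
      gg_ge2[OF v1(1) v2(1) d12, of f "sc n j"] v0(3) v1(3) v2(3)
    by linarith
qed

lemma both_bad: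
  assumes c: "c < n" and zl: "gg n f (pc n c) = 0" and zr: "gg n f (sc n c) = 0"
  shows "3 dvd gg n f c"
  unfolding gg_def
proof (rule dvd_sum)
  fix v assume v: "v \<in> VV n"
  have "\<not> (f v = 2 \<and> near n (snd v) c)"
  proof
    assume h: "f v = 2 \<and> near n (snd v) c"
    then have "near n (snd v) (sc n c) \<or> near n (snd v) (pc n c)"
      using c unfolding near_def by auto
    then have "wt n f v (sc n c) = 2 \<or> wt n f v (pc n c) = 2" using h unfolding wt_def by auto
    then show False using gg_zero[OF zl v] gg_zero[OF zr v] by auto
  qed
  then show "3 dvd wt n f v c" unfolding wt_def by auto
qed

lemma sum_gg_le:
  assumes lb: "\<forall>v\<in>VV n. f v \<le> 2"
  shows "(\<Sum>c<n. gg n f c) \<le> 3 * (\<Sum>v\<in>VV n. f v)"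
proof -
  have "(\<Sum>c<n. gg n f c) = (\<Sum>v\<in>VV n. \<Sum>c<n. wt n f v c)" unfolding gg_def by (rule sum.swap)
  also have "\<dots> \<le> (\<Sum>v\<in>VV n. 3 * f v)"
  proof (rule sum_mono)
    fix v assume v: "v \<in> VV n"
    obtain b k where vbk: "v = (b, k)" "k < n" using v by (auto simp: VV_eq)
    consider "f v = 0" | "f v = 1" | "f v = 2" using lb v by fastforce
    then show "(\<Sum>c<n. wt n f v c) \<le> 3 * f v"
    proof cases
      case 1 then show ?thesis unfolding wt_def by simp
    next
      case 2
      have "(\<Sum>c<n. wt n f v c) = (\<Sum>c<n. if k = c then 3 else 0)"
        unfolding wt_def using 2 vbk by (intro sum.cong) auto
      also have "\<dots> = 3" using vbk by simp
      finally show ?thesis using 2 by simp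
    next
      case 3
      have "(\<Sum>c<n. wt n f v c) = (\<Sum>c<n. if near n k c then 2 else 0)"
        unfolding wt_def using 3 vbk by (intro sum.cong) auto
      also have "\<dots> = (\<Sum>c\<in>{c\<in>{..<n}. near n k c}. 2)"
        by (rule sum.inter_filter[symmetric]) simp
      also have "\<dots> \<le> (\<Sum>c\<in>{k, pc n k, sc n k}. 2)"
      proof (rule sum_mono2)
        show "{c \<in> {..<n}. near n k c} \<subseteq> {k, pc n k, sc n k}"
        proof
          fix c assume "c \<in> {c \<in> {..<n}. near n k c}"
          then have c: "c < n" "near n k c" by auto
          then show "c \<in> {k, pc n k, sc n k}" unfolding near_def by auto
        qed
      qed auto
      also have "\<dots> \<le> 6"
      proof -
        have "card {k, pc n k, sc n k} \<le> 3" by (auto simp: card_insert_if)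
        then show ?thesis by simp
      qed
      finally show ?thesis using 3 by simp
    qed
  qed
  also have "\<dots> = 3 * (\<Sum>v\<in>VV n. f v)" by (simp add: sum_distrib_left)
  finally show ?thesis .
qed

lemma lower:
  assumes n3: "3 \<le> n" and lim: "limited_broadcast 2 (VV n) f"
    and dom: "dominating_broadcast (VV n) (EE n) f"
  shows "2 * n \<le> 3 * broadcast_cost (VV n) f"
proof -
  have lb: "\<forall>v\<in>VV n. f v \<le> 2" using lim unfolding limited_broadcast_def by blast
  define g where "g = gg n f"
  define B where "B c = (g c = 0)" for c
  define dL where "dL c = (B c \<and> 4 \<le> g (pc n c))" for c
  define dR where "dR c = (B c \<and> \<not> 4 \<le> g (pc n c))" for c
  have F3: "4 \<le> g (pc n c) \<or> 4 \<le> g (sc n c)" if "c < n" "B c" for c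
    using bad_side[OF n3 lb dom that(1)] that(2) unfolding B_def g_def by blast
  have pt: "2 + 2 * (of_bool (dL (sc n c))::nat) + 2 * of_bool (dR (pc n c)) \<le> g c + 2 * of_bool (B c)"
    if c: "c < n" for c
  proof (cases "B c")
    case True
    have "\<not> dL (sc n c)" using True c unfolding dL_def B_def by simp
    moreover have "\<not> dR (pc n c)"
    proof
      assume h: "dR (pc n c)"
      then have "B (pc n c)" "\<not> 4 \<le> g (pc n (pc n c))" unfolding dR_def by auto
      then have "4 \<le> g (sc n (pc n c))" using F3[OF pc_lt[OF c]] by auto
      then show False using True c unfolding B_def by simp
    qed
    ultimately show ?thesis using True by simp
  next
    case False
    have g2: "2 \<le> g c" using gg_pos2 False unfolding B_def g_def by blast
    have L: "4 \<le> g c" if "dL (sc n c)" using that c unfolding dL_def by simp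
    have R: "4 \<le> g c" if h: "dR (pc n c)"
    proof -
      from h have "B (pc n c)" "\<not> 4 \<le> g (pc n (pc n c))" unfolding dR_def by auto
      then show "4 \<le> g c" using F3[OF pc_lt[OF c]] c by auto
    qed
    have LR: "6 \<le> g c" if h1: "dL (sc n c)" and h2: "dR (pc n c)"
    proof -
      have "B (sc n c)" "B (pc n c)" using h1 h2 unfolding dL_def dR_def by auto
      then have "3 dvd g c" using both_bad[OF c, of f] unfolding B_def g_def by simp
      then obtain t where t: "g c = 3 * t" by (auto elim: dvdE)
      have "4 \<le> g c" using L[OF h1] .
      then show "6 \<le> g c" using t by presburger
    qed
    show ?thesis using False g2 L R LR by (cases "dL (sc n c)"; cases "dR (pc n c)") auto
  qed
  have bij_sc: "bij_betw (sc n) {..<n} {..<n}"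
    by (rule bij_betw_byWitness[of _ "pc n"]) (auto simp: sc_lt pc_lt)
  have bij_pc: "bij_betw (pc n) {..<n} {..<n}"
    by (rule bij_betw_byWitness[of _ "sc n"]) (auto simp: sc_lt pc_lt)
  have sL: "(\<Sum>c<n. (of_bool (dL (sc n c))::nat)) = (\<Sum>c<n. of_bool (dL c))"
    by (rule sum.reindex_bij_betw[OF bij_sc])
  have sR: "(\<Sum>c<n. (of_bool (dR (pc n c))::nat)) = (\<Sum>c<n. of_bool (dR c))"
    by (rule sum.reindex_bij_betw[OF bij_pc])
  have sB: "(\<Sum>c<n. (of_bool (B c)::nat)) = (\<Sum>c<n. of_bool (dL c)) + (\<Sum>c<n. of_bool (dR c))"
    unfolding sum.distrib[symmetric] by (rule sum.cong) (auto simp: dL_def dR_def)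
  have "(\<Sum>c<n. 2 + 2 * (of_bool (dL (sc n c))::nat) + 2 * of_bool (dR (pc n c)))
      \<le> (\<Sum>c<n. g c + 2 * of_bool (B c))"
    by (rule sum_mono) (use pt in auto)
  also have "(\<Sum>c<n. 2 + 2 * (of_bool (dL (sc n c))::nat) + 2 * of_bool (dR (pc n c)))
      = 2 * n + 2 * (\<Sum>c<n. (of_bool (dL (sc n c))::nat)) + 2 * (\<Sum>c<n. (of_bool (dR (pc n c))::nat))"
    unfolding sum.distrib sum_distrib_left[symmetric] sum_constant card_lessThan of_nat_id by linarith
  also have "(\<Sum>c<n. g c + 2 * (of_bool (B c)::nat)) = (\<Sum>c<n. g c) + 2 * (\<Sum>c<n. (of_bool (B c)::nat))"
    unfolding sum.distrib sum_distrib_left[symmetric] by linarith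
  finally have "2 * n \<le> (\<Sum>c<n. g c)" unfolding sL sR sB distrib_left by linarith
  also have "\<dots> \<le> 3 * broadcast_cost (VV n) f"
    unfolding g_def broadcast_cost_def by (rule sum_gg_le[OF lb])
  finally show ?thesis .
qed

lemma gd_same:
  assumes "a < 3" "b < 3" "j < n"
  shows "gdist (VV n) (EE n) (a, j) (b, j) \<le> 1"
proof (cases "a = b")
  case True
  have "is_walk (VV n) (EE n) [(a, j)] (a, j) (a, j)" using assms by (intro walk_single) (simp add: VV_eq)
  from gdist_le[OF this] True show ?thesis by simp
next
  case False
  have w1: "is_walk (VV n) (EE n) [(b, j)] (b, j) (b, j)" using assms by (intro walk_single) (simp add: VV_eq)
  have m: "(a, j) \<in> VV n" using assms by (simp add: VV_eq)
  have e: "EE n (a, j) (b, j)" using assms False by (simp add: EE_iff)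
  from gdist_le[OF walk_cons[OF w1 m e]] show ?thesis by simp
qed

lemma gd_adj:
  assumes "a < 3" "b < 3" "cycle_E n j k"
  shows "gdist (VV n) (EE n) (a, j) (b, k) \<le> 2"
proof -
  have jk: "j < n" "k < n" using assms(3) by (auto simp: cycle_E_iff)
  have w1: "is_walk (VV n) (EE n) [(b, k)] (b, k) (b, k)" using assms jk by (intro walk_single) (simp add: VV_eq)
  have mb: "(b, j) \<in> VV n" using assms jk by (simp add: VV_eq)
  have eb: "EE n (b, j) (b, k)" using assms by (simp add: EE_iff)
  have w2: "is_walk (VV n) (EE n) [(b, j), (b, k)] (b, j) (b, k)" by (rule walk_cons[OF w1 mb eb])
  show ?thesis
  proof (cases "a = b")
    case True
    from gdist_le[OF w2] True show ?thesis by simp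
  next
    case False
    have m: "(a, j) \<in> VV n" using assms jk by (simp add: VV_eq)
    have e: "EE n (a, j) (b, j)" using assms False jk by (simp add: EE_iff)
    from gdist_le[OF walk_cons[OF w2 m e]] show ?thesis by simp
  qed
qed

definition f0 :: "nat \<Rightarrow> nat \<times> nat \<Rightarrow> nat" where
  "f0 n v = (if fst v = 0 \<and> snd v < n then
      (if snd v mod 3 = 1 then 2 else if Suc (snd v) = n \<and> n mod 3 = 1 then 1 else 0) else 0)"

lemma f0_limited: "limited_broadcast 2 (VV n) (f0 n)"
  unfolding limited_broadcast_def f0_def by (auto simp: VV_eq)

lemma f0_dom:
  assumes n3: "3 \<le> n"
  shows "dominating_broadcast (VV n) (EE n) (f0 n)"
  unfolding dominating_broadcast_def
proof
  fix u assume u: "u \<in> VV n"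
  obtain a c where ac: "u = (a, c)" "a < 3" "c < n" using u by (auto simp: VV_eq)
  show "\<exists>v\<in>VV n. hears (VV n) (EE n) (f0 n) u v"
  proof (cases "Suc c = n \<and> n mod 3 = 1")
    case True
    have cm: "c mod 3 \<noteq> 1"
    proof -
      have "Suc c = n" "n mod 3 = 1" using True by blast+
      then show ?thesis by presburger
    qed
    have fv: "f0 n (0, c) = 1" using True cm ac(3) unfolding f0_def by simp
    have g: "gdist (VV n) (EE n) (a, c) (0, c) \<le> 1" using gd_same[of a 0 c n] ac(2,3) by linarith
    have "0 < f0 n (0, c) \<and> gdist (VV n) (EE n) (a, c) (0, c) \<le> f0 n (0, c)" using g fv by linarith
    then have "hears (VV n) (EE n) (f0 n) u (0, c)" unfolding hears_def ac(1) .
    moreover have "(0, c) \<in> VV n" using ac by (simp add: VV_eq)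
    ultimately show ?thesis by blast
  next
    case False
    define c' where "c' = (if c mod 3 = 1 then c else if c mod 3 = 0 then Suc c else c - 1)"
    have nn: "\<not> (Suc c = n \<and> n mod 3 = 1)" using False .
    have c0: "c mod 3 = 0 \<Longrightarrow> Suc c < n"
    proof -
      assume h: "c mod 3 = 0"
      have "Suc c \<noteq> n"
      proof
        assume "Suc c = n"
        then have "n mod 3 = 1" using h by (auto simp: mod_Suc)
        then show False using nn \<open>Suc c = n\<close> by blast
      qed
      then show ?thesis using ac(3) by linarith
    qed
    have c'n: "c' < n" unfolding c'_def using c0 ac by auto
    have m0: "c mod 3 = 0 \<Longrightarrow> Suc c mod 3 = 1" by (simp add: mod_Suc)
    have m2: "(c - 1) mod 3 = 1" if h0: "c mod 3 \<noteq> 0" and h1: "c mod 3 \<noteq> 1"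
    proof -
      have "c mod 3 < 3" by simp
      then have h2: "c mod 3 = 2" using h0 h1 by linarith
      have cz: "c \<noteq> 0" using h0 by auto
      then have "Suc (c - 1) = c" by simp
      then have "Suc (c - 1) mod 3 = 2" using h2 by simp
      then show ?thesis by (auto simp: mod_Suc split: if_splits)
    qed
    have c'm: "c' mod 3 = 1" unfolding c'_def using m0 m2 by auto
    have fv: "f0 n (0, c') = 2" using c'n c'm unfolding f0_def by simp
    have "gdist (VV n) (EE n) (a, c) (0, c') \<le> 2"
    proof (cases "c' = c")
      case True
      then show ?thesis using gd_same[of a 0 c n] ac(2,3) by simp
    next
      case False
      have "c' = sc n c \<or> c' = pc n c"
      proof (cases "c mod 3 = 1")
        case True then show ?thesis using False unfolding c'_def by simp
      next
        case F1: False
        show ?thesis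
        proof (cases "c mod 3 = 0")
          case True
          then have "c' = Suc c" "Suc c < n" using F1 c0 unfolding c'_def by auto
          then have "c' = sc n c" unfolding sc_def by simp
          then show ?thesis by blast
        next
          case F2: False
          then have "c \<noteq> 0" by auto
          then have "c' = c - 1" "c \<noteq> 0" using F1 F2 unfolding c'_def by auto
          then have "c' = pc n c" unfolding pc_def by simp
          then show ?thesis by blast
        qed
      qed
      then have "cycle_E n c c'" using False c'n ac by (auto simp: cycle_E_iff)
      then show ?thesis using gd_adj[of a 0 n c c'] ac(2) by simp
    qed
    then have "0 < f0 n (0, c') \<and> gdist (VV n) (EE n) (a, c) (0, c') \<le> f0 n (0, c')" using fv by linarith
    then have "hears (VV n) (EE n) (f0 n) u (0, c')" unfolding hears_def ac(1) .
    moreover have "(0, c') \<in> VV n" using c'n by (simp add: VV_eq)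
    ultimately show ?thesis by blast
  qed
qed

lemma cnt: "(\<Sum>k<n. if k mod 3 = 1 then 2 else 0::nat) = 2 * ((n + 1) div 3)"
proof (induction n)
  case 0 show ?case by simp
next
  case (Suc m)
  have h1: "m mod 3 = 1 \<Longrightarrow> (m + 2) div 3 = (m + 1) div 3 + 1" by presburger
  have h2: "m mod 3 \<noteq> 1 \<Longrightarrow> (m + 2) div 3 = (m + 1) div 3" by presburger
  show ?case
  proof (cases "m mod 3 = 1")
    case True then show ?thesis using Suc h1 by simp
  next
    case False then show ?thesis using Suc h2 by simp
  qed
qed

lemma f0_cost:
  assumes n3: "3 \<le> n"
  shows "broadcast_cost (VV n) (f0 n) = (2 * n + 2) div 3"
proof -
  have "broadcast_cost (VV n) (f0 n) = (\<Sum>a\<in>{0..<3}. \<Sum>k\<in>{0..<n}. f0 n (a, k))"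
    unfolding broadcast_cost_def VV_eq by (simp add: sum.cartesian_product)
  also have "\<dots> = (\<Sum>a\<in>{0..<3::nat}. if a = 0 then (\<Sum>k\<in>{0..<n}. f0 n (0, k)) else 0)"
    by (rule sum.cong) (auto simp: f0_def)
  also have "\<dots> = (\<Sum>k\<in>{0..<n}. f0 n (0, k))" by simp
  also have "\<dots> = (\<Sum>k<n. (if k mod 3 = 1 then 2 else 0) + (if k = n - 1 \<and> n mod 3 = 1 then 1 else 0))"
  proof (rule sum.cong)
    fix k assume k: "k \<in> {..<n}"
    have h: "k = n - 1 \<Longrightarrow> n mod 3 = 1 \<Longrightarrow> k mod 3 = 0" using k by auto presburger
    show "f0 n (0, k) = (if k mod 3 = 1 then 2 else 0) + (if k = n - 1 \<and> n mod 3 = 1 then 1 else 0)"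
      using k h unfolding f0_def by auto
  qed (simp add: atLeast0LessThan)
  also have "\<dots> = (\<Sum>k<n. if k mod 3 = 1 then 2 else 0) + (\<Sum>k<n. if k = n - 1 then (if n mod 3 = 1 then 1 else 0) else 0)"
    unfolding sum.distrib by (intro arg_cong2[where f="(+)"] refl sum.cong) auto
  also have "\<dots> = 2 * ((n + 1) div 3) + (if n mod 3 = 1 then 1 else 0)"
  proof -
    have d: "(\<Sum>k<n. if k = n - 1 then (if n mod 3 = 1 then 1 else 0) else 0) = (if n mod 3 = 1 then 1 else (0::nat))"
      using n3 by simp
    show ?thesis unfolding cnt d ..
  qed
  also have "\<dots> = (2 * n + 2) div 3" by presburger
  finally show ?thesis .
qed

lemma ceil_eq: "nat \<lceil>2 * real n / 3\<rceil> = (2 * n + 2) div 3"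
proof -
  define m where "m = (2 * n + 2) div 3"
  have a: "3 * m \<le> 2 * n + 2" "2 * n \<le> 3 * m" unfolding m_def by presburger+
  have b1: "real (3 * m) \<le> real (2 * n + 2)" using a(1) by linarith
  have b2: "real (2 * n) \<le> real (3 * m)" using a(2) by linarith
  have "\<lceil>2 * real n / 3\<rceil> = int m"
    by (rule ceiling_unique) (use b1 b2 in simp_all)
  then show ?thesis unfolding m_def by simp
qed

theorem theorem4p1:
  fixes n :: nat
  assumes "n \<ge> 3"
  shows "limited_broadcast_domination_number 2 (cart_V (cycle_V 3) (cycle_V n))
           (cart_E (cycle_E 3) (cycle_E n)) = nat \<lceil>2 * real n / 3\<rceil>"
  unfolding limited_broadcast_domination_number_def ceil_eq
proof (rule Least_equality)
  show "\<exists>f. limited_broadcast 2 (VV n) f \<and> dominating_broadcast (VV n) (EE n) f \<and>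
      broadcast_cost (VV n) f = (2 * n + 2) div 3"
    using f0_limited f0_dom[OF assms] f0_cost[OF assms] by blast
next
  fix y assume "\<exists>f. limited_broadcast 2 (VV n) f \<and> dominating_broadcast (VV n) (EE n) f \<and>
      broadcast_cost (VV n) f = y"
  then obtain f where f: "limited_broadcast 2 (VV n) f" "dominating_broadcast (VV n) (EE n) f"
    "broadcast_cost (VV n) f = y" by blast
  have "2 * n \<le> 3 * y" using lower[OF assms f(1) f(2)] f(3) by simp
  then show "(2 * n + 2) div 3 \<le> y" by presburger
qed

end
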